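(* For $\alpha\in\mathbb{R}\setminus\{0\}$ consider the two-stage explicit Runge--Kutta method with $$A=\begin{pmatrix}0&0\\ \alpha&0\end{pmatrix},\qquad b^\top=\Big(1-\tfrac{1}{2\alpha},\ \tfrac{1}{2\alpha}\Big).$$ Its positivity step-size coefficient is $$\gamma_\alpha=\begin{cases}0,&0\ne\alpha<\tfrac12,\\ 1,&\tfrac12\le\alpha\le1,\\ \tfrac1\alpha,&\alpha>1.\end{cases}$$
   Context: For this method, the positivity polynomials (in the variables $\xi^1_{k-1},\xi^1_k,\xi^2_k$) are $P_0=1-(1-\frac1{2\alpha})\xi^1_k-\frac1{2\alpha}\xi^2_k+\frac12\xi^1_k\xi^2_k$, $P_1=(1-\frac1{2\alpha})\xi^1_k+\frac1{2\alpha}\xi^2_k-\frac12\xi^1_{k-1}\xi^2_k-\frac12\xi^1_k\xi^2_k$, $P_2=\frac12\xi^1_{k-1}\xi^2_k$. These arise as follows: applying the method to $u_k'=q_k(u,t)(u_{k-1}-u_k)/\Delta x$ gives $y^1=u^n$, $y^2_k=u^n_k+\alpha\xi^1_k(y^1_{k-1}-y^1_k)$, $u^{n+1}_k=u^n_k+b_1\xi^1_k(y^1_{k-1}-y^1_k)+b_2\xi^2_k(y^2_{k-1}-y^2_k)$ with $\xi^j_k=\frac{\Delta t}{\Delta x}q_k(y^j,t_n+c_j\Delta t)$, and $u^{n+1}_k=P_0u^n_k+P_1u^n_{k-1}+P_2u^n_{k-2}$. The step-size coefficient is $\gamma_\alpha=\sup\{\delta\ge0:P_0,P_1,P_2\ge0\text{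 on }[0,\delta]^3\}$ (or $0$ if the set is empty). *)

theory Defs
  imports Complex_Main
begin

text \<open>Positivity polynomials of the two-stage explicit RK method with A = [[0,0],[alpha,0]],
  b = (1 - 1/(2 alpha), 1/(2 alpha)), in the variables xi1m = xi^1_{k-1}, xi1 = xi^1_k, xi2 = xi^2_k.\<close>

definition P0 :: "real \<Rightarrow> real \<Rightarrow> real \<Rightarrow> real \<Rightarrow> real" where
  "P0 \<alpha> xi1m xi1 xi2 = 1 - (1 - 1 / (2 * \<alpha>)) * xi1 - 1 / (2 * \<alpha>) * xi2 + 1/2 * xi1 * xi2"

definition P1 :: "real \<Rightarrow> real \<Rightarrow> real \<Rightarrow> real \<Rightarrow> real" where
  "P1 \<alpha> xi1m xi1 xi2 = (1 - 1 / (2 * \<alpha>)) * xi1 + 1 / (2 * \<alpha>) * xi2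
     - 1/2 * xi1m * xi2 - 1/2 * xi1 * xi2"

definition P2 :: "real \<Rightarrow> real \<Rightarrow> real \<Rightarrow> real \<Rightarrow> real" where
  "P2 \<alpha> xi1m xi1 xi2 = 1/2 * xi1m * xi2"

definition admissible_deltas :: "real \<Rightarrow> real set" where
  "admissible_deltas \<alpha> = {\<delta>. \<delta> \<ge> 0 \<and>
     (\<forall>xi1m \<in> {0..\<delta>}. \<forall>xi1 \<in> {0..\<delta>}. \<forall>xi2 \<in> {0..\<delta>}.
        P0 \<alpha> xi1m xi1 xi2 \<ge> 0 \<and> P1 \<alpha> xi1m xi1 xi2 \<ge> 0 \<and> P2 \<alpha> xi1m xi1 xi2 \<ge> 0)}"

definition step_size_coeff :: "real \<Rightarrow> real" where
  "step_size_coeff \<alpha> = (if admissible_deltas \<alpha> = {} then 0 else Sup (admissible_deltas \<alpha>))"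

end

theory Submission
  imports Defs
begin

lemma goodA:
  fixes x y z c :: real
  assumes "0\<le>x" "x\<le>1" "0\<le>y" "y\<le>1" "0\<le>z" "z\<le>1" "1/2 \<le> c" "c \<le> 1"
  shows "0 \<le> 1 - (1-c)*x - c*y + 1/2*x*y \<and> 0 \<le> (1-c)*x + c*y - 1/2*z*y - 1/2*x*y \<and> 0 \<le> 1/2*z*y"
proof -
  have h1: "0 \<le> (1-c)*(1-x)" "0 \<le> c*(1-y)" "0 \<le> x*y" "0 \<le> (1-c)*x*(1-y)"
    "0 \<le> (c-1/2)*y*(1-x)" "0 \<le> (1 - z)*y" "0 \<le> z*y"
    using assms by (simp_all add: mult_nonneg_nonneg)
  have e1: "1 - (1-c)*x - c*y + 1/2*x*y = (1-c)*(1-x) + c*(1-y) + 1/2*(x*y)" by (simp add: algebra_simps)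
  have e2: "(1-c)*x + c*y - 1/2*z*y - 1/2*x*y = (1-c)*x*(1-y) + (c-1/2)*y*(1-x) + 1/2*((1-z)*y)"
    by (simp add: field_simps)
  show ?thesis using h1 e1 e2 by linarith
qed

lemma goodB:
  fixes x y z c d :: real
  assumes "0\<le>x" "x\<le>d" "0\<le>y" "y\<le>d" "0\<le>z" "z\<le>d" "0 < c" "c < 1/2" "d \<le> 2*c"
  shows "0 \<le> 1 - (1-c)*x - c*y + 1/2*x*y \<and> 0 \<le> (1-c)*x + c*y - 1/2*z*y - 1/2*x*y \<and> 0 \<le> 1/2*z*y"
proof -
  have h1: "0 \<le> x*y" "0 \<le> (d - z)*y" "0 \<le> y*(2*c - d)" "0 \<le> x*(1 - c - y/2)" "0 \<le> z*y"
    using assms by (simp_all add: mult_nonneg_nonneg)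
  have e2: "(1-c)*x + c*y - 1/2*z*y - 1/2*x*y = 1/2*((d - z)*y) + 1/2*(y*(2*c - d)) + x*(1 - c - y/2)"
    by (simp add: algebra_simps)
  have "(1-c)*x \<le> (1-c)*d" "c*y \<le> c*d" using assms by (simp_all add: mult_left_mono)
  moreover have "(1-c)*d + c*d = d" by (simp add: algebra_simps)
  moreover have "1/2*x*y = 1/2*(x*y)" "1/2*z*y = 1/2*(z*y)" by simp_all
  ultimately show ?thesis using h1 e2 assms by linarith
qed

theorem proposition2:
  fixes \<alpha> :: real
  assumes "\<alpha> \<noteq> 0"
  shows "step_size_coeff \<alpha> =
           (if \<alpha> < 1/2 then 0 else if \<alpha> \<le> 1 then 1 else 1 / \<alpha>)"
proof -
  define c where "c = 1 / (2*\<alpha>)"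
  define M where "M = (if \<alpha> < 1/2 then 0 else if \<alpha> \<le> 1 then 1 else 1 / (\<alpha>::real))"
  have P0e: "P0 \<alpha> m x y = 1 - (1-c)*x - c*y + 1/2*x*y" for m x y
    by (simp add: P0_def c_def)
  have P1e: "P1 \<alpha> m x y = (1-c)*x + c*y - 1/2*m*y - 1/2*x*y" for m x y
    by (simp add: P1_def c_def)
  have P2e: "P2 \<alpha> m x y = 1/2*m*y" for m x y
    by (simp add: P2_def)
  have M0: "0 \<le> M" unfolding M_def by auto
  have set: "admissible_deltas \<alpha> = {0..M}"
  proof (intro set_eqI iffI)
    fix d assume "d \<in> {0..M}"
    hence d: "0 \<le> d" "d \<le> M" by auto
    show "d \<in> admissible_deltas \<alpha>"
      unfolding admissible_deltas_def
    proof (intro CollectI conjI d ballI)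
      fix m x y assume "m \<in> {0..d}" "x \<in> {0..d}" "y \<in> {0..d}"
      hence r: "0\<le>m" "m\<le>d" "0\<le>x" "x\<le>d" "0\<le>y" "y\<le>d" by auto
      have "0 \<le> 1 - (1-c)*x - c*y + 1/2*x*y \<and> 0 \<le> (1-c)*x + c*y - 1/2*m*y - 1/2*x*y \<and> 0 \<le> 1/2*m*y"
      proof (cases "\<alpha> < 1/2")
        case True
        then have "d = 0" using d M_def by auto
        then show ?thesis using r by auto
      next
        case F: False
        show ?thesis
        proof (cases "\<alpha> \<le> 1")
          case True
          have "1/2 \<le> c" "c \<le> 1" using F True by (auto simp: c_def field_simps)
          moreover have "d \<le> 1" using d F True M_def by auto
          ultimately show ?thesis using r goodA[of x y m c] by auto
        next
          case False
          have "0 < c" "c < 1/2" using F False by (auto simp: c_def field_simps)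
          moreover have "d \<le> 2*c" using d F False M_def c_def by auto
          ultimately show ?thesis using r goodB[of x d y m c] by auto
        qed
      qed
      thus "0 \<le> P0 \<alpha> m x y" "0 \<le> P1 \<alpha> m x y" "0 \<le> P2 \<alpha> m x y"
        by (simp_all add: P0e P1e P2e)
    qed
  next
    fix d assume "d \<in> admissible_deltas \<alpha>"
    hence d0: "0 \<le> d" and A: "\<And>m x y. m \<in> {0..d} \<Longrightarrow> x \<in> {0..d} \<Longrightarrow> y \<in> {0..d} \<Longrightarrow>
       0 \<le> P1 \<alpha> m x y"
      unfolding admissible_deltas_def by auto
    have "d \<le> M"
    proof (rule ccontr)
      assume "\<not> d \<le> M"
      hence dM: "M < d" by simp
      hence dp: "0 < d" using M0 by simp
      show False
      proof (cases "\<alpha> < 1/2")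
        case T: True
        show False
        proof (cases "\<alpha> < 0")
          case True
          have "c < 0" using True by (simp add: c_def divide_neg_pos)
          have "0 \<le> P1 \<alpha> 0 0 d" using A dp by auto
          then have "0 \<le> c * d" by (simp add: P1e)
          then show False using \<open>c < 0\<close> dp by (simp add: mult_nonneg_nonneg zero_le_mult_iff)
        next
          case False
          have "c > 1" using False T assms by (simp add: c_def field_simps)
          have "0 \<le> P1 \<alpha> 0 d 0" using A dp by auto
          then have "0 \<le> (1-c) * d" by (simp add: P1e)
          then show False using \<open>c > 1\<close> dp by (simp add: zero_le_mult_iff)
        qed
      next
        case F: False
        show False
        proof (cases "\<alpha> \<le> 1")
          case True
          have "1 < d" using dM F True M_def by auto
          have "0 \<le> P1 \<alpha> d d d" using A dp by auto
          then have "0 \<le> d * (1 - d)" by (simp add: P1e algebra_simps)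
          then show False using \<open>1 < d\<close> by (simp add: zero_le_mult_iff)
        next
          case False
          have "2*c < d" using dM F False M_def c_def by auto
          have "0 \<le> P1 \<alpha> d 0 d" using A dp by auto
          then have "0 \<le> d * (c - d/2)" by (simp add: P1e algebra_simps)
          then show False using \<open>2*c < d\<close> dp by (simp add: zero_le_mult_iff)
        qed
      qed
    qed
    thus "d \<in> {0..M}" using d0 by auto
  qed
  show ?thesis unfolding step_size_coeff_def set M_def[symmetric] using M0 by simp
qed

end
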